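(* Let $n>24$, $0<\epsilon<\frac13$, $\delta>0$, $s>0$, and let $m=\epsilon^{-2}n^{1+\delta}$ (assumed to be an integer). Then $$\mathsf P\left\{ x\in U^m:\ \left|\sum_{i=1}^n \frac{k_i(x)(k_i(x)-1)}{m(m-1)}\cdot\frac{1}{\|p\|^2}-1\right|\le \epsilon\left(3+\frac{6s}{n^{\delta/2}}+\frac{5s^2\epsilon}{n^{\delta}}\right)\right\}\ \ge\ 1-\frac{10}{9}e^{-s^2/4}.$$
   Context: Standing setup: $U$ is a finite set (the key space) with a probability measure $q$; $T=\{1,\dots,n\}$; $h:U\to T$ is an arbitrary function. $p_i=\sum_{u\in h^{-1}(i)}q(u)$ and $\|p\|^2=\sum_{i=1}^n p_i^2$. $U^m$ carries the product measure $q^m$ (keys chosen independently), and $\mathsf P$ denotes probability under $q^m$. For $x=(x_1,\dots,x_m)\in U^m$, $k_i(x)=|\{j: h(x_j)=i\}|$ (number of keys of $x$ hashed to slot $i$, with multiplicity). *)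

theory Defs
  imports Complex_Main "HOL-Library.FuncSet"
begin

definition slot_prob :: "'a set \<Rightarrow> ('a \<Rightarrow> real) \<Rightarrow> ('a \<Rightarrow> nat) \<Rightarrow> nat \<Rightarrow> real" where
  "slot_prob U q h i = (\<Sum>u\<in>{u\<in>U. h u = i}. q u)"

definition norm_p_sq :: "'a set \<Rightarrow> ('a \<Rightarrow> real) \<Rightarrow> ('a \<Rightarrow> nat) \<Rightarrow> nat \<Rightarrow> real" where
  "norm_p_sq U q h n = (\<Sum>i=1..n. (slot_prob U q h i)^2)"

definition kcount :: "('a \<Rightarrow> nat) \<Rightarrow> nat \<Rightarrow> (nat \<Rightarrow> 'a) \<Rightarrow> nat \<Rightarrow> nat" where
  "kcount h m x i = card {j\<in>{..<m}. h (x j) = i}"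

definition prob_prod :: "'a set \<Rightarrow> ('a \<Rightarrow> real) \<Rightarrow> nat \<Rightarrow> ((nat \<Rightarrow> 'a) \<Rightarrow> bool) \<Rightarrow> real" where
  "prob_prod U q m P = (\<Sum>x\<in>{x \<in> Pi\<^sub>E {..<m} (\<lambda>_. U). P x}. \<Prod>j<m. q (x j))"

end

theory Submission
  imports Defs "HOL-Analysis.Convex"
begin

lemma sum_PiE_insert:
  assumes "a \<notin> I"
  shows "(\<Sum>x\<in>PiE (insert a I) (\<lambda>_. U). f x) = (\<Sum>u\<in>U. \<Sum>y\<in>PiE I (\<lambda>_. U). f (y(a:=u)))"
proof -
  have "(\<Sum>x\<in>PiE (insert a I) (\<lambda>_. U). f x) = (\<Sum>p\<in>U \<times> PiE I (\<lambda>_. U). f ((\<lambda>(y,g). g(a:=y)) p))"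
    unfolding PiE_insert_eq using inj_combinator[OF assms, of "\<lambda>_. U"]
    by (subst sum.reindex) auto
  also have "\<dots> = (\<Sum>u\<in>U. \<Sum>y\<in>PiE I (\<lambda>_. U). f (y(a:=u)))"
    by (simp add: sum.cartesian_product split_def)
  finally show ?thesis .
qed

lemma mass:
  fixes q :: "'a \<Rightarrow> real"
  assumes "finite I" "finite U" "(\<Sum>u\<in>U. q u) = 1"
  shows "(\<Sum>x\<in>PiE I (\<lambda>_. U). \<Prod>j\<in>I. q (x j)) = 1"
  using prod_sum_PiE[of I "\<lambda>_. U" "\<lambda>_ u. q u"] assms by simp

lemma pair_fact:
  fixes F :: "'a \<Rightarrow> 'a \<Rightarrow> real" and q :: "'a \<Rightarrow> real" and M :: "(nat \<times> nat) set"
  assumes "finite M" "finite U" "(\<Sum>u\<in>U. q u) = 1"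
  shows "finite I \<Longrightarrow> \<forall>e\<in>M. fst e \<in> I \<and> snd e \<in> I \<and> fst e \<noteq> snd e \<Longrightarrow>
     \<forall>e1\<in>M. \<forall>e2\<in>M. e1 \<noteq> e2 \<longrightarrow> {fst e1, snd e1} \<inter> {fst e2, snd e2} = {} \<Longrightarrow>
    (\<Sum>x\<in>PiE I (\<lambda>_. U). (\<Prod>j\<in>I. q (x j)) * (\<Prod>e\<in>M. F (x (fst e)) (x (snd e))))
       = (\<Sum>u\<in>U. \<Sum>v\<in>U. q u * q v * F u v) ^ card M"
  using assms(1)
proof (induction M arbitrary: I rule: finite_induct)
  case empty
  then show ?case using mass[OF _ assms(2,3)] by simp
next
  case (insert e M)
  define a where "a = fst e"
  define b where "b = snd e"
  define I' where "I' = I - {a,b}"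
  have ab: "a \<in> I" "b \<in> I" "a \<noteq> b" using insert.prems unfolding a_def b_def by auto
  have Ieq: "I = insert a (insert b I')" using ab unfolding I'_def by auto
  have aI': "a \<notin> insert b I'" "b \<notin> I'" using ab unfolding I'_def by auto
  have fI': "finite I'" using insert.prems unfolding I'_def by auto
  have Mavoid: "\<forall>e'\<in>M. fst e' \<noteq> a \<and> fst e' \<noteq> b \<and> snd e' \<noteq> a \<and> snd e' \<noteq> b"
  proof
    fix e' assume "e' \<in> M"
    then have "e' \<noteq> e" using insert.hyps by auto
    then have "{fst e', snd e'} \<inter> {a, b} = {}" using insert.prems(3) \<open>e' \<in> M\<close>
      unfolding a_def b_def by auto
    then show "fst e' \<noteq> a \<and> fst e' \<noteq> b \<and> snd e' \<noteq> a \<and> snd e' \<noteq> b" by auto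
  qed
  have IH: "(\<Sum>x\<in>PiE I' (\<lambda>_. U). (\<Prod>j\<in>I'. q (x j)) * (\<Prod>e\<in>M. F (x (fst e)) (x (snd e))))
       = (\<Sum>u\<in>U. \<Sum>v\<in>U. q u * q v * F u v) ^ card M"
    apply (rule insert.IH[OF fI'])
    using insert.prems Mavoid unfolding I'_def by auto
  let ?G = "\<lambda>x. (\<Prod>j\<in>I'. q (x j)) * (\<Prod>e\<in>M. F (x (fst e)) (x (snd e)))"
  have key: "(\<Prod>j\<in>I. q ((z(b:=v, a:=u)) j)) * (\<Prod>e\<in>insert e M. F ((z(b:=v, a:=u)) (fst e)) ((z(b:=v, a:=u)) (snd e)))
     = (q u * q v * F u v) * ?G z" for z u v
  proof -
    have 1: "(\<Prod>j\<in>I. q ((z(b:=v, a:=u)) j)) = q u * (q v * (\<Prod>j\<in>I'. q ((z(b:=v, a:=u)) j)))"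
      unfolding Ieq using aI' fI' ab by simp
    have 2: "(\<Prod>j\<in>I'. q ((z(b:=v, a:=u)) j)) = (\<Prod>j\<in>I'. q (z j))"
      using aI' by (intro prod.cong) auto
    have 3: "(\<Prod>e\<in>insert e M. F ((z(b:=v, a:=u)) (fst e)) ((z(b:=v, a:=u)) (snd e)))
        = F u v * (\<Prod>e\<in>M. F ((z(b:=v, a:=u)) (fst e)) ((z(b:=v, a:=u)) (snd e)))"
      using insert.hyps ab unfolding a_def b_def by simp
    have 4: "(\<Prod>e\<in>M. F ((z(b:=v, a:=u)) (fst e)) ((z(b:=v, a:=u)) (snd e))) = (\<Prod>e\<in>M. F (z (fst e)) (z (snd e)))"
      using Mavoid by (intro prod.cong) auto
    show ?thesis unfolding 1 2 3 4 by (simp add: algebra_simps)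
  qed
  have split3: "(\<Sum>x\<in>PiE I (\<lambda>_. U). f x) = (\<Sum>u\<in>U. \<Sum>v\<in>U. \<Sum>z\<in>PiE I' (\<lambda>_. U). f (z(b:=v, a:=u)))" for f
  proof -
    have "PiE I (\<lambda>_. U) = PiE (insert a (insert b I')) (\<lambda>_. U)" using Ieq by simp
    then show ?thesis by (simp only: sum_PiE_insert[OF aI'(1)] sum_PiE_insert[OF aI'(2)])
  qed
  have "(\<Sum>x\<in>PiE I (\<lambda>_. U). (\<Prod>j\<in>I. q (x j)) * (\<Prod>e\<in>insert e M. F (x (fst e)) (x (snd e))))
     = (\<Sum>u\<in>U. \<Sum>v\<in>U. \<Sum>z\<in>PiE I' (\<lambda>_. U). (q u * q v * F u v) * ?G z)"
    using split3[of "\<lambda>x. (\<Prod>j\<in>I. q (x j)) * (\<Prod>e\<in>insert e M. F (x (fst e)) (x (snd e)))"] key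
    by simp
  also have "\<dots> = (\<Sum>u\<in>U. \<Sum>v\<in>U. q u * q v * F u v) * (\<Sum>z\<in>PiE I' (\<lambda>_. U). ?G z)"
    by (simp only: sum_distrib_left[symmetric] sum_distrib_right[symmetric])
  also have "\<dots> = (\<Sum>u\<in>U. \<Sum>v\<in>U. q u * q v * F u v) ^ card (insert e M)"
    using IH insert.hyps by simp
  finally show ?case .
qed

definition P2 :: "nat \<Rightarrow> (nat \<times> nat) set" where "P2 m = (SIGMA b:{..<m}. {..<b})"
definition Hd :: "nat \<Rightarrow> nat \<Rightarrow> (nat \<times> nat) set" where
  "Hd m d = {p \<in> P2 m. (fst p + snd p) mod m = d}"

lemma finite_P2[simp]: "finite (P2 m)" unfolding P2_def by auto
lemma finite_Hd[simp]: "finite (Hd m d)" unfolding Hd_def by auto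

lemma mod_cancel_aux0: "(x + y) mod m = (x + y') mod (m::nat) \<Longrightarrow> y \<le> y' \<Longrightarrow> y' < m \<Longrightarrow> y = y'"
proof -
  assume a: "(x + y) mod m = (x + y') mod (m::nat)" "y \<le> y'" "y' < m"
  have "m dvd (x + y') - (x + y)" using a by (subst mod_eq_dvd_iff_nat[symmetric]) auto
  then have "m dvd y' - y" by simp
  moreover have "y' - y < m" using a by auto
  ultimately have "y' - y = 0" using dvd_imp_le by (metis not_less zero_less_iff_neq_zero)
  then show ?thesis using a by simp
qed
lemma mod_cancel_aux: "(x + y) mod m = (x + y') mod (m::nat) \<Longrightarrow> y < m \<Longrightarrow> y' < m \<Longrightarrow> y = y'"
  by (metis mod_cancel_aux0 nat_le_linear)

lemma Hd_disj:
  assumes "e1 \<in> Hd m d" "e2 \<in> Hd m d" "e1 \<noteq> e2"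
  shows "{fst e1, snd e1} \<inter> {fst e2, snd e2} = {}"
proof (rule ccontr)
  assume "{fst e1, snd e1} \<inter> {fst e2, snd e2} \<noteq> {}"
  obtain b1 a1 b2 a2 where e: "e1 = (b1,a1)" "e2 = (b2,a2)" by fastforce
  have h: "a1 < b1" "b1 < m" "a2 < b2" "b2 < m" "(b1 + a1) mod m = d" "(b2 + a2) mod m = d"
    using assms unfolding e Hd_def P2_def by auto
  have "b1 = b2 \<or> b1 = a2 \<or> a1 = b2 \<or> a1 = a2" using \<open>_ \<noteq> {}\<close> unfolding e by auto
  then show False
  proof (elim disjE)
    assume "b1 = b2" then have "a1 = a2" using h mod_cancel_aux[of b1 a1 m a2] by auto
    then show False using assms \<open>b1 = b2\<close> e by auto
  next
    assume "b1 = a2" then have "a1 = b2" using h mod_cancel_aux[of b1 a1 m b2] by (auto simp: add.commute)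
    then show False using h \<open>b1 = a2\<close> by auto
  next
    assume "a1 = b2" then have "b1 = a2" using h mod_cancel_aux[of a1 b1 m a2] by (auto simp: add.commute)
    then show False using h \<open>a1 = b2\<close> by auto
  next
    assume "a1 = a2" then have "b1 = b2" using h mod_cancel_aux[of a1 b1 m b2] by (auto simp: add.commute)
    then show False using assms \<open>a1 = a2\<close> e by auto
  qed
qed

lemma Fix_card:
  fixes m d :: nat
  assumes "0 < m"
  shows "card {a. a < m \<and> (a + a) mod m = d} \<le> 2"
proof (cases "{a. a < m \<and> (a + a) mod m = d} = {}")
  case True then show ?thesis by (simp only: True card.empty)
next
  case False
  let ?F = "{a. a < m \<and> (a + a) mod m = d}"
  define a0 where "a0 = Min ?F"
  have fin: "finite ?F" by auto
  have a0F: "a0 \<in> ?F" unfolding a0_def using Min_in[OF fin False] .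
  have sub: "?F \<subseteq> {a0, a0 + m div 2}"
  proof
    fix a assume aF: "a \<in> ?F"
    have le: "a0 \<le> a" unfolding a0_def using aF fin by simp
    have "(a + a) mod m = (a0 + a0) mod m" using aF a0F by simp
    then have "m dvd (a + a) - (a0 + a0)" using le by (subst mod_eq_dvd_iff_nat[symmetric]) auto
    then obtain k where k: "(a + a) - (a0 + a0) = m * k" by auto
    have "(a + a) - (a0 + a0) < 2 * m" using aF by auto
    then have "k < 2" using k by (metis mult_less_cancel1 mult.commute zero_less_iff_neq_zero nat_mult_less_cancel_disj)
    then have "k = 0 \<or> k = 1" by auto
    then show "a \<in> {a0, a0 + m div 2}"
    proof
      assume "k = 0" then show ?thesis using k le by auto
    next
      assume "k = 1" then show ?thesis using k le by auto
    qed
  qed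
  have "card ?F \<le> card {a0, a0 + m div 2}" by (rule card_mono) (use sub in auto)
  also have "\<dots> \<le> 2" by (simp add: card_insert_le_m1)
  finally show ?thesis .
qed

lemma Hd_card:
  assumes "0 < m" "d < m"
  shows "m \<le> 2 * card (Hd m d) + 2"
proof -
  let ?F = "{a. a < m \<and> (a + a) mod m = d}"
  let ?A = "{a. a < m \<and> (a + a) mod m \<noteq> d}"
  have A_sub: "?A \<subseteq> fst ` Hd m d \<union> snd ` Hd m d"
  proof
    fix a assume aA: "a \<in> ?A"
    define c where "c = (d + m - a) mod m"
    have cm: "c < m" unfolding c_def using assms by auto
    have "(a + c) mod m = (a + (d + m - a)) mod m" unfolding c_def by (simp add: mod_add_right_eq)
    also have "a + (d + m - a) = d + m" using aA by auto
    finally have ac: "(a + c) mod m = d" using assms by simp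
    have "c \<noteq> a" using ac aA by auto
    show "a \<in> fst ` Hd m d \<union> snd ` Hd m d"
    proof (cases "a < c")
      case True
      have "(c, a) \<in> Hd m d" unfolding Hd_def P2_def using True cm ac by (auto simp: add.commute)
      then show ?thesis by force
    next
      case False
      then have "c < a" using \<open>c \<noteq> a\<close> by auto
      have "(a, c) \<in> Hd m d" unfolding Hd_def P2_def using \<open>c < a\<close> aA ac by auto
      then show ?thesis by force
    qed
  qed
  have "card ?A \<le> card (fst ` Hd m d \<union> snd ` Hd m d)" by (rule card_mono) (use A_sub in auto)
  also have "\<dots> \<le> card (fst ` Hd m d) + card (snd ` Hd m d)" by (rule card_Un_le)
  also have "\<dots> \<le> 2 * card (Hd m d)" using card_image_le[of "Hd m d" fst] card_image_le[of "Hd m d" snd] by simp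
  finally have 1: "card ?A \<le> 2 * card (Hd m d)" .
  have "{..<m} \<subseteq> ?A \<union> ?F" by auto
  then have "card {..<m} \<le> card (?A \<union> ?F)" by (intro card_mono) auto
  also have "\<dots> \<le> card ?A + card ?F" by (rule card_Un_le)
  finally have "m \<le> card ?A + card ?F" by simp
  then show ?thesis using 1 Fix_card[OF assms(1), of d] by linarith
qed

lemma sum_Hd:
  assumes "0 < m"
  shows "(\<Sum>d<m. \<Sum>e\<in>Hd m d. f e) = (\<Sum>e\<in>P2 m. f e)"
  unfolding Hd_def using assms by (intro sum.group) auto

lemma sum_P2: "(\<Sum>e\<in>P2 m. f e) = (\<Sum>b<m. \<Sum>a<b. f (b,a))"
  unfolding P2_def by (simp add: sum.Sigma)

lemma card_P2: "2 * card (P2 m) = m * (m - 1)"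
proof -
  have "card (P2 m) = (\<Sum>b<m. b)" unfolding P2_def by (simp add: card_SigmaI)
  moreover have "2 * (\<Sum>b<m. b) = m * (m - 1)" for m :: nat
  proof (induction m)
    case (Suc m) then show ?case by (cases m) (auto simp: algebra_simps)
  qed simp
  ultimately show ?thesis by simp
qed

lemma kcount_Suc: "kcount h (Suc m) x i = kcount h m x i + (if h (x m) = i then 1 else 0)"
proof -
  have "{j\<in>{..<Suc m}. h (x j) = i} = (if h (x m) = i then insert m {j\<in>{..<m}. h (x j) = i} else {j\<in>{..<m}. h (x j) = i})"
    by (auto simp: less_Suc_eq)
  then show ?thesis unfolding kcount_def by auto
qed

lemma kcount_eq: "kcount h m x i = (\<Sum>a<m. if h (x a) = i then 1 else 0)"
  unfolding kcount_def by (simp add: sum.inter_filter[symmetric])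

lemma collision_identity:
  "(\<forall>j<m. h (x j) \<in> {1..n}) \<Longrightarrow>
   (\<Sum>i=1..n. real (kcount h m x i) * (real (kcount h m x i) - 1))
     = 2 * (\<Sum>b<m. \<Sum>a<b. if h (x a) = h (x b) then 1 else 0)"
proof (induction m)
  case 0 then show ?case by (simp add: kcount_def)
next
  case (Suc m)
  let ?k = "\<lambda>i. real (kcount h m x i)"
  let ?t = "\<lambda>i. if h (x m) = i then 1 else (0::real)"
  have step: "real (kcount h (Suc m) x i) * (real (kcount h (Suc m) x i) - 1) = ?k i * (?k i - 1) + 2 * ?k i * ?t i" for i
    by (simp add: kcount_Suc algebra_simps)
  have hm: "h (x m) \<in> {1..n}" using Suc.prems by auto
  have "(\<Sum>i=1..n. 2 * ?k i * ?t i) = 2 * ?k (h (x m))"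
  proof -
    have "(\<Sum>i=1..n. 2 * ?k i * ?t i) = (\<Sum>i\<in>{1..n}. if i = h (x m) then 2 * ?k i else 0)"
      by (intro sum.cong) auto
    also have "\<dots> = 2 * ?k (h (x m))" using hm by (subst sum.delta) auto
    finally show ?thesis .
  qed
  also have "?k (h (x m)) = (\<Sum>a<m. if h (x a) = h (x m) then 1 else 0)"
    by (simp add: kcount_eq of_nat_sum if_distrib cong: if_cong)
  finally have 2: "(\<Sum>i=1..n. 2 * ?k i * ?t i) = 2 * (\<Sum>a<m. if h (x a) = h (x m) then 1 else 0)" .
  have "(\<Sum>i=1..n. real (kcount h (Suc m) x i) * (real (kcount h (Suc m) x i) - 1))
      = (\<Sum>i=1..n. ?k i * (?k i - 1)) + (\<Sum>i=1..n. 2 * ?k i * ?t i)"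
    by (simp add: step sum.distrib)
  also have "(\<Sum>i=1..n. ?k i * (?k i - 1)) = 2 * (\<Sum>b<m. \<Sum>a<b. if h (x a) = h (x b) then 1 else 0)"
    using Suc by auto
  finally show ?case using 2 by simp
qed

lemma exp_quad:
  fixes c :: real
  assumes "c \<le> 1"
  shows "exp c \<le> 1 + c + c^2"
proof (cases "c \<ge> 0")
  case True then show ?thesis using exp_bound assms by auto
next
  case False
  define f where "f = - c"
  have f: "f > 0" using False f_def by auto
  have e: "1 + f + f^2/2 \<le> exp f" using exp_lower_Taylor_quadratic f by auto
  have "1 - f + f^2 = (f - 1/2)^2 + 3/4" by (simp add: power2_eq_square algebra_simps)
  then have pos: "1 - f + f^2 > 0" using zero_le_power2[of "f - 1/2"] by linarith
  have "1 \<le> (1 - f + f^2) * (1 + f + f^2/2)"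
  proof -
    have "(1 - f + f^2) * (1 + f + f^2/2) = 1 + f^2/2 + f^3/2 + f^4/2"
      unfolding power2_eq_square power3_eq_cube power4_eq_xxxx by (simp add: field_simps)
    then show ?thesis using f by (simp add: add_nonneg_nonneg)
  qed
  also have "\<dots> \<le> (1 - f + f^2) * exp f" using e pos by (intro mult_left_mono) auto
  finally have "1 \<le> (1 - f + f^2) * exp f" .
  then have "exp (-f) \<le> 1 - f + f^2"
    by (simp add: exp_minus field_simps)
  then show ?thesis unfolding f_def by simp
qed

lemma pair_sum_exp:
  fixes q :: "'a \<Rightarrow> real" and h :: "'a \<Rightarrow> nat"
  assumes "(\<Sum>u\<in>U. q u) = 1"
    and "p2 = (\<Sum>u\<in>U. \<Sum>v\<in>U. q u * q v * (if h u = h v then 1 else 0))"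
  shows "(\<Sum>u\<in>U. \<Sum>v\<in>U. q u * q v * exp (c * (if h u = h v then 1 else 0))) = 1 + p2 * (exp c - 1)"
proof -
  have "(\<Sum>u\<in>U. \<Sum>v\<in>U. q u * q v * exp (c * (if h u = h v then 1 else 0)))
      = (\<Sum>u\<in>U. \<Sum>v\<in>U. q u * q v + (exp c - 1) * (q u * q v * (if h u = h v then 1 else 0)))"
    by (intro sum.cong) (auto simp: algebra_simps)
  also have "\<dots> = (\<Sum>u\<in>U. \<Sum>v\<in>U. q u * q v) + (exp c - 1) * p2"
    using assms(2) by (simp add: sum.distrib sum_distrib_left)
  also have "(\<Sum>u\<in>U. \<Sum>v\<in>U. q u * q v) = 1"
    using assms(1) by (simp add: sum_distrib_left[symmetric] sum_distrib_right[symmetric])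
  finally show ?thesis by (simp add: algebra_simps)
qed

lemma mgf:
  fixes q :: "'a \<Rightarrow> real" and h :: "'a \<Rightarrow> nat" and l \<kappa> p2 :: real
  assumes finU: "finite U" and qnn: "\<forall>u\<in>U. q u \<ge> 0" and qs: "(\<Sum>u\<in>U. q u) = 1"
    and m0: "0 < m"
    and p2def: "p2 = (\<Sum>u\<in>U. \<Sum>v\<in>U. q u * q v * (if h u = h v then 1 else 0))"
    and p2pos: "p2 > 0"
    and kap: "\<kappa> > 0" "\<forall>d<m. \<kappa> \<le> real (card (Hd m d))"
    and lam: "l \<le> \<kappa> * p2"
  shows "(\<Sum>x\<in>PiE {..<m} (\<lambda>_. U). (\<Prod>j<m. q (x j)) *
           exp (l * ((\<Sum>b<m. \<Sum>a<b. if h (x a) = h (x b) then 1 else 0) / (real (card (P2 m)) * p2))))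
         \<le> exp (l + l^2 / (p2 * \<kappa>))"
proof -
  define G where "G = (\<lambda>u v. if h u = h v then 1 else (0::real))"
  define r where "r = (\<lambda>d. real (card (Hd m d)))"
  define R where "R = real (card (P2 m))"
  define S where "S = PiE {..<m} (\<lambda>_. U)"
  define w where "w = (\<lambda>x. \<Prod>j<m. q (x j))"
  define c where "c = (\<lambda>d. l / (p2 * r d))"
  define Y where "Y = (\<lambda>d x. c d * (\<Sum>e\<in>Hd m d. G (x (fst e)) (x (snd e))))"
  have rpos: "r d > 0" if "d < m" for d using kap that unfolding r_def by force
  have Rsum: "R = (\<Sum>d<m. r d)"
    unfolding R_def r_def using sum_Hd[OF m0, of "\<lambda>_. 1::real"] by simp
  have Rpos: "R > 0" unfolding Rsum using rpos m0 by (intro sum_pos) auto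
  have wnn: "w x \<ge> 0" if "x \<in> S" for x
    unfolding w_def using that qnn unfolding S_def by (intro prod_nonneg) auto
  have Cs: "(\<Sum>b<m. \<Sum>a<b. if h (x a) = h (x b) then 1 else 0) = (\<Sum>d<m. \<Sum>e\<in>Hd m d. G (x (fst e)) (x (snd e)))" for x
    unfolding sum_Hd[OF m0] sum_P2 G_def by (intro sum.cong) auto
  have decomp: "l * ((\<Sum>b<m. \<Sum>a<b. if h (x a) = h (x b) then 1 else 0) / (R * p2)) = (\<Sum>d<m. (r d / R) *\<^sub>R Y d x)" for x
  proof -
    have "(\<Sum>d<m. (r d / R) *\<^sub>R Y d x) = (\<Sum>d<m. l / (R * p2) * (\<Sum>e\<in>Hd m d. G (x (fst e)) (x (snd e))))"
      unfolding Y_def c_def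
    proof (intro sum.cong refl)
      fix d assume "d \<in> {..<m}"
      then have "r d > 0" using rpos by auto
      then show "(r d / R) *\<^sub>R (l / (p2 * r d) * (\<Sum>e\<in>Hd m d. G (x (fst e)) (x (snd e))))
          = l / (R * p2) * (\<Sum>e\<in>Hd m d. G (x (fst e)) (x (snd e)))"
        using p2pos Rpos by (simp add: field_simps)
    qed
    also have "\<dots> = l * ((\<Sum>b<m. \<Sum>a<b. if h (x a) = h (x b) then 1 else 0) / (R * p2))"
      unfolding Cs by (simp add: sum_divide_distrib[symmetric] sum_distrib_left[symmetric])
    finally show ?thesis by simp
  qed
  have jensen: "exp (\<Sum>d<m. (r d / R) *\<^sub>R Y d x) \<le> (\<Sum>d<m. (r d / R) * exp (Y d x))" for x
    using m0 rpos Rpos Rsum by (intro convex_on_sum[OF _ _ exp_convex])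
      (auto simp: sum_divide_distrib[symmetric] intro: divide_nonneg_pos less_imp_le)
  have each: "(\<Sum>x\<in>S. w x * exp (Y d x)) \<le> exp (l + l^2 / (p2 * \<kappa>))" if d: "d < m" for d
  proof -
    define B where "B = 1 + p2 * (exp (c d) - 1)"
    have "(\<Sum>x\<in>S. w x * exp (Y d x)) = (\<Sum>x\<in>S. w x * (\<Prod>e\<in>Hd m d. exp (c d * G (x (fst e)) (x (snd e)))))"
      unfolding Y_def by (simp add: sum_distrib_left exp_sum)
    also have "\<dots> = (\<Sum>u\<in>U. \<Sum>v\<in>U. q u * q v * exp (c d * G u v)) ^ card (Hd m d)"
      unfolding S_def w_def
      apply (rule pair_fact[OF finite_Hd finU qs])
      using Hd_disj[of _ m d] unfolding Hd_def P2_def by auto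
    also have "(\<Sum>u\<in>U. \<Sum>v\<in>U. q u * q v * exp (c d * G u v)) = B"
      unfolding B_def G_def using pair_sum_exp[OF qs p2def] by simp
    finally have eq: "(\<Sum>x\<in>S. w x * exp (Y d x)) = B ^ card (Hd m d)" .
    have B0: "B \<ge> 0"
    proof -
      have "B = (\<Sum>u\<in>U. \<Sum>v\<in>U. q u * q v * exp (c d * G u v))"
        unfolding B_def G_def using pair_sum_exp[OF qs p2def] by simp
      also have "\<dots> \<ge> 0" using qnn by (intro sum_nonneg mult_nonneg_nonneg) auto
      finally show ?thesis .
    qed
    have "B \<le> exp (p2 * (exp (c d) - 1))" unfolding B_def using exp_ge_add_one_self[of "p2 * (exp (c d) - 1)"] by simp
    then have "B ^ card (Hd m d) \<le> exp (p2 * (exp (c d) - 1)) ^ card (Hd m d)"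
      using B0 by (intro power_mono) auto
    also have "\<dots> = exp (r d * (p2 * (exp (c d) - 1)))"
      unfolding r_def by (simp add: exp_of_nat_mult)
    also have "\<dots> \<le> exp (l + l^2 / (p2 * \<kappa>))"
    proof -
      have cle: "c d \<le> 1"
      proof (cases "l \<ge> 0")
        case True
        have "l \<le> r d * p2" using lam kap d p2pos unfolding r_def
          by (meson dual_order.trans less_imp_le mult_right_mono)
        then show ?thesis unfolding c_def using rpos[OF d] p2pos by (simp add: field_simps)
      next
        case False
        then show ?thesis unfolding c_def using rpos[OF d] p2pos
          by (smt (verit) divide_nonpos_pos mult_pos_pos)
      qed
      have "r d * (p2 * (exp (c d) - 1)) \<le> r d * (p2 * (c d + (c d)^2))"
        using exp_quad[OF cle] rpos[OF d] p2pos by (intro mult_left_mono) auto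
      also have "\<dots> = l + l^2 / (p2 * r d)"
        unfolding c_def using rpos[OF d] p2pos by (simp add: field_simps power2_eq_square)
      also have "\<dots> \<le> l + l^2 / (p2 * \<kappa>)"
        using kap d p2pos rpos[OF d] unfolding r_def
        by (intro add_left_mono divide_left_mono mult_left_mono) auto
      finally show ?thesis by simp
    qed
    finally show ?thesis using eq by simp
  qed
  have "(\<Sum>x\<in>S. w x * exp (l * ((\<Sum>b<m. \<Sum>a<b. if h (x a) = h (x b) then 1 else 0) / (R * p2))))
      \<le> (\<Sum>x\<in>S. w x * (\<Sum>d<m. (r d / R) * exp (Y d x)))"
    unfolding decomp using wnn jensen by (intro sum_mono mult_left_mono) auto
  also have "\<dots> = (\<Sum>d<m. (r d / R) * (\<Sum>x\<in>S. w x * exp (Y d x)))"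
    by (simp add: sum_distrib_left sum_distrib_right algebra_simps sum.swap[of _ S])
  also have "\<dots> \<le> (\<Sum>d<m. (r d / R) * exp (l + l^2 / (p2 * \<kappa>)))"
    using each rpos Rpos by (intro sum_mono mult_left_mono) (auto intro: divide_nonneg_pos less_imp_le)
  also have "\<dots> = exp (l + l^2 / (p2 * \<kappa>))"
    using Rsum Rpos by (simp add: sum_distrib_right[symmetric] sum_divide_distrib[symmetric])
  finally show ?thesis unfolding S_def w_def R_def .
qed

lemma slot_prob_eq: "finite U \<Longrightarrow> slot_prob U q h i = (\<Sum>u\<in>U. if h u = i then q u else 0)"
  unfolding slot_prob_def by (simp add: sum.inter_filter)

lemma slot_facts:
  fixes q :: "'a \<Rightarrow> real" and h :: "'a \<Rightarrow> nat"
  assumes finU: "finite U" and hr: "\<forall>u\<in>U. h u \<in> {1..n}" and qs: "(\<Sum>u\<in>U. q u) = 1"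
  shows "norm_p_sq U q h n = (\<Sum>u\<in>U. \<Sum>v\<in>U. q u * q v * (if h u = h v then 1 else 0))"
    and "(\<Sum>i=1..n. slot_prob U q h i) = 1"
proof -
  have ind: "(\<Sum>i=1..n. (if h u = i then 1 else 0) * (if h v = i then 1 else (0::real))) = (if h u = h v then 1 else 0)"
    if "u \<in> U" for u v
  proof -
    have "(\<Sum>i=1..n. (if h u = i then 1 else 0) * (if h v = i then 1 else (0::real)))
        = (\<Sum>i\<in>{1..n}. if i = h u then (if h v = i then 1 else 0) else 0)"
      by (intro sum.cong) auto
    also have "\<dots> = (if h u = h v then 1 else 0)" using hr that by (subst sum.delta) auto
    finally show ?thesis .
  qed
  have "norm_p_sq U q h n = (\<Sum>i=1..n. \<Sum>u\<in>U. \<Sum>v\<in>U. q u * q v * ((if h u = i then 1 else 0) * (if h v = i then 1 else 0)))"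
    unfolding norm_p_sq_def slot_prob_eq[OF finU] power2_eq_square sum_product
    by (intro sum.cong) (auto simp: if_distrib)
  also have "\<dots> = (\<Sum>u\<in>U. \<Sum>i=1..n. \<Sum>v\<in>U. q u * q v * ((if h u = i then 1 else 0) * (if h v = i then 1 else 0)))"
    by (rule sum.swap)
  also have "\<dots> = (\<Sum>u\<in>U. \<Sum>v\<in>U. \<Sum>i=1..n. q u * q v * ((if h u = i then 1 else 0) * (if h v = i then 1 else 0)))"
    by (intro sum.cong refl sum.swap)
  also have "\<dots> = (\<Sum>u\<in>U. \<Sum>v\<in>U. q u * q v * (\<Sum>i=1..n. (if h u = i then 1 else 0) * (if h v = i then 1 else 0)))"
    by (simp add: sum_distrib_left)
  also have "\<dots> = (\<Sum>u\<in>U. \<Sum>v\<in>U. q u * q v * (if h u = h v then 1 else 0))"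
    using ind by simp
  finally show "norm_p_sq U q h n = (\<Sum>u\<in>U. \<Sum>v\<in>U. q u * q v * (if h u = h v then 1 else 0))" .
  have "(\<Sum>i=1..n. slot_prob U q h i) = (\<Sum>u\<in>U. \<Sum>i=1..n. if h u = i then q u else 0)"
    unfolding slot_prob_eq[OF finU] by (rule sum.swap)
  also have "\<dots> = (\<Sum>u\<in>U. q u)"
    using hr by (intro sum.cong refl) (simp add: sum.delta eq_commute[of "h _"])
  finally show "(\<Sum>i=1..n. slot_prob U q h i) = 1" using qs by simp
qed

lemma norm_lower:
  fixes p :: "nat \<Rightarrow> real"
  assumes "(\<Sum>i=1..n. p i) = 1" "n > 0"
  shows "(\<Sum>i=1..n. (p i)^2) \<ge> 1 / n"
proof -
  have "0 \<le> (\<Sum>i=1..n. (p i - 1/n)^2)" by (intro sum_nonneg) auto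
  also have "\<dots> = (\<Sum>i=1..n. (p i)^2) - 2/n * (\<Sum>i=1..n. p i) + n * (1/n)^2"
    by (simp add: power2_diff sum.distrib sum_subtractf sum_distrib_left sum_divide_distrib algebra_simps)
  finally show ?thesis using assms by (simp add: power2_eq_square field_simps)
qed

lemma final_arith:
  fixes n a \<epsilon> s K T :: real
  assumes n: "n \<ge> 25" and a: "a \<ge> 1" and e0: "0 < \<epsilon>" and e1: "\<epsilon> < 1/3" and s: "s > 0"
    and K: "K \<ge> (n * a^2 / \<epsilon>^2 - 2) / (2 * n)"
    and T: "T = \<epsilon> * (3 + 6 * s / a + 5 * s^2 * \<epsilon> / a^2)"
  shows "K * (if T \<le> 2 then T^2/4 else T/2) \<ge> s^2/4 + 1"
proof -
  define \<phi> where "\<phi> = (if T \<le> 2 then T^2/4 else T/2)"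
  define A where "A = a^2"
  have A1: "A \<ge> 1" unfolding A_def using a by (simp add: one_le_power)
  have "\<epsilon>^2 < (1/3)^2" using e0 e1 by (intro power_strict_mono) auto
  then have e2: "\<epsilon>^2 < 1/9" by (simp add: power2_eq_square)
  have e2p: "\<epsilon>^2 > 0" using e0 by simp
  have Ae: "A / \<epsilon>^2 \<ge> 9" using A1 e2 e2p by (simp add: field_simps)
  have t1: "6 * s / a \<ge> 0" using s a by simp
  have t2: "5 * s^2 * \<epsilon> / A \<ge> 0" using s e0 A1 by simp
  have Tpos: "T \<ge> 0" using T t1 t2 e0 unfolding A_def by simp
  have phi0: "\<phi> \<ge> 0" unfolding \<phi>_def using Tpos by auto
  have Keq: "(n * a^2 / \<epsilon>^2 - 2) / (2 * n) = A / (2 * \<epsilon>^2) - 1 / n"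
    unfolding A_def using n e2p by (simp add: field_simps)
  have "K * \<phi> \<ge> (A / (2 * \<epsilon>^2) - 1 / n) * \<phi>"
    using K Keq phi0 by (intro mult_right_mono) auto
  moreover have "(A / (2 * \<epsilon>^2) - 1 / n) * \<phi> \<ge> s^2/4 + 1"
  proof (cases "T \<le> 2")
    case True
    then have phi: "\<phi> = T^2/4" unfolding \<phi>_def by simp
    have "T \<ge> \<epsilon> * (3 + 6 * s / a)" using T t2 e0 unfolding A_def by (simp add: mult_left_mono)
    then have Tsq: "(\<epsilon> * (3 + 6 * s / a))^2 \<le> T^2" using e0 t1 by (intro power_mono) auto
    have "\<epsilon>^2 * (9 + 36 * s^2 / A) \<le> \<epsilon>^2 * (9 + 36 * (s/a) + 36 * s^2 / A)"
      using s a e2p by (intro mult_left_mono) auto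
    also have "\<dots> = (\<epsilon> * (3 + 6 * s / a))^2"
      unfolding A_def using a by (simp add: power2_eq_square field_simps)
    also note Tsq
    finally have T2: "\<epsilon>^2 * (9 + 36 * s^2 / A) \<le> T^2" .
    have "A / (2 * \<epsilon>^2) * \<phi> \<ge> A / (2 * \<epsilon>^2) * (\<epsilon>^2 * (9 + 36 * s^2 / A) / 4)"
      unfolding phi using T2 A1 e2p by (intro mult_left_mono divide_right_mono) auto
    also have "A / (2 * \<epsilon>^2) * (\<epsilon>^2 * (9 + 36 * s^2 / A) / 4) = 9 * A / 8 + 9 * s^2 / 2"
      using A1 e2p by (simp add: field_simps)
    finally have m1: "A / (2 * \<epsilon>^2) * \<phi> \<ge> 9 * A / 8 + 9 * s^2 / 2" .
    have "T^2 \<le> 2^2" using True Tpos by (intro power_mono) auto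
    then have "\<phi> \<le> 1" unfolding phi by simp
    then have m2: "\<phi> / n \<le> 1 / 25" using n phi0 by (simp add: field_simps)
    have "s^2 \<ge> 0" by simp
    moreover have "(A / (2 * \<epsilon>^2) - 1 / n) * \<phi> = A / (2 * \<epsilon>^2) * \<phi> - \<phi> / n" by (simp add: algebra_simps)
    ultimately show ?thesis using m1 m2 A1 by linarith
  next
    case False
    then have phi: "\<phi> = T/2" unfolding \<phi>_def by simp
    define Q where "Q = A * T / \<epsilon>^2"
    have "9 * T \<le> (A / \<epsilon>^2) * T" using Ae Tpos by (intro mult_right_mono) auto
    then have Q9: "Q \<ge> 9 * T" unfolding Q_def by simp
    have "T \<ge> \<epsilon> * (5 * s^2 * \<epsilon> / A)" unfolding T A_def using t1 e0 by (intro mult_left_mono) auto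
    then have "Q \<ge> A * (\<epsilon> * (5 * s^2 * \<epsilon> / A)) / \<epsilon>^2" unfolding Q_def using A1 e2p
      by (intro divide_right_mono mult_left_mono) auto
    also have "A * (\<epsilon> * (5 * s^2 * \<epsilon> / A)) / \<epsilon>^2 = 5 * s^2" using A1 e0 by (simp add: field_simps power2_eq_square)
    finally have Qs: "Q \<ge> 5 * s^2" .
    have "(A / (2 * \<epsilon>^2) - 1 / n) * \<phi> = Q / 4 - T / (2 * n)" unfolding phi Q_def by (simp add: field_simps)
    moreover have "T / (2 * n) \<le> T / 50" using n Tpos by (simp add: field_simps mult_left_mono)
    ultimately show ?thesis using Q9 Qs False by linarith
  qed
  ultimately show ?thesis unfolding \<phi>_def by linarith
qed

lemma tail_b1:
  fixes K T l1 \<phi> :: real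
  assumes Kpos: "K > 0" and Tpos: "T \<ge> 0"
    and l1_def: "l1 = (if T \<le> 2 then K * T / 2 else K)"
    and \<phi>_def: "\<phi> = (if T \<le> 2 then T^2/4 else T/2)"
  shows "-l1 * (1 + T) + (l1 + l1^2 / K) \<le> - K * \<phi>"
proof (cases "T \<le> 2")
  case True
  have sq: "(K * T / 2)^2 / K = K * T^2 / 4" using Kpos by (simp add: power2_eq_square)
  have l1: "l1 = K * T / 2" using True l1_def by simp
  have "-l1 * (1 + T) + (l1 + l1^2 / K) = -(K * T / 2) * (1 + T) + (K * T / 2 + K * T^2 / 4)"
    unfolding l1 sq by simp
  also have "\<dots> = - K * (T^2 / 4)" by (simp add: field_simps power2_eq_square)
  finally have eq: "-l1 * (1 + T) + (l1 + l1^2 / K) = - K * (T^2 / 4)" .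
  have phi: "\<phi> = T^2/4" using True \<phi>_def by simp
  show ?thesis using eq unfolding phi by linarith
next
  case False
  have sq: "K^2 / K = K" using Kpos by (simp add: power2_eq_square)
  have "-l1 * (1 + T) + (l1 + l1^2 / K) = - K * T + K" using False sq l1_def
    by (simp add: algebra_simps)
  also have "\<dots> \<le> - K * (T / 2)"
  proof -
    have "K * 2 \<le> K * T" using False Kpos by (intro mult_left_mono) auto
    then show ?thesis by simp
  qed
  finally have eq: "-l1 * (1 + T) + (l1 + l1^2 / K) \<le> - K * (T / 2)" .
  have phi: "\<phi> = T/2" using False \<phi>_def by simp
  show ?thesis using eq unfolding phi by linarith
qed

lemma tail_b2:
  fixes K T l2 \<phi> :: real
  assumes Kpos: "K > 0" and Tpos: "T \<ge> 0"
    and l2_def: "l2 = - (K * T / 2)"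
    and \<phi>_def: "\<phi> = (if T \<le> 2 then T^2/4 else T/2)"
  shows "-l2 * (1 - T) + (l2 + l2^2 / K) \<le> - K * \<phi>"
proof -
  have sq: "(K * T / 2)^2 / K = K * T^2 / 4" using Kpos by (simp add: power2_eq_square)
  have "-l2 * (1 - T) + (l2 + l2^2 / K) = (K * T / 2) * (1 - T) + (-(K * T / 2) + K * T^2 / 4)"
    using sq l2_def by simp
  also have "\<dots> = - K * (T^2/4)" by (simp add: field_simps power2_eq_square)
  also have "\<dots> \<le> - K * \<phi>"
  proof -
    have "\<phi> \<le> T^2/4"
    proof (cases "T \<le> 2")
      case False
      then have TT: "T * 2 \<le> T * T" using Tpos by (intro mult_left_mono) auto
      have phi: "\<phi> = T/2" using False \<phi>_def by simp
      show ?thesis using TT unfolding phi power2_eq_square by linarith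
    qed (use \<phi>_def in simp)
    then show ?thesis using Kpos by (simp add: mult_left_mono)
  qed
  finally show ?thesis .
qed

theorem theorem2:
  fixes U :: "'a set" and q :: "'a \<Rightarrow> real" and h :: "'a \<Rightarrow> nat"
    and n m :: nat and \<epsilon> \<delta> s :: real
  assumes finU: "finite U"
    and q_nonneg: "\<forall>u\<in>U. q u \<ge> 0"
    and q_sum: "(\<Sum>u\<in>U. q u) = 1"
    and h_range: "\<forall>u\<in>U. h u \<in> {1..n}"
    and n_gt: "n > 24"
    and eps_pos: "0 < \<epsilon>" and eps_lt: "\<epsilon> < 1/3"
    and delta_pos: "\<delta> > 0"
    and s_pos: "s > 0"
    and m_def: "real m = \<epsilon> powr (-2) * real n powr (1 + \<delta>)"
  shows "prob_prod U q m
           (\<lambda>x. \<bar>(\<Sum>i=1..n. real (kcount h m x i) * (real (kcount h m x i) - 1)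
                          / (real m * (real m - 1))) * (1 / norm_p_sq U q h n) - 1\<bar>
                \<le> \<epsilon> * (3 + 6 * s / real n powr (\<delta>/2) + 5 * s^2 * \<epsilon> / real n powr \<delta>))
         \<ge> 1 - 10/9 * exp (- (s^2) / 4)"
proof -
  define S where "S = PiE {..<m} (\<lambda>_. U)"
  define w where "w = (\<lambda>x. \<Prod>j<m. q (x j))"
  define P where "P = norm_p_sq U q h n"
  define a where "a = real n powr (\<delta>/2)"
  define T where "T = \<epsilon> * (3 + 6 * s / real n powr (\<delta>/2) + 5 * s^2 * \<epsilon> / real n powr \<delta>)"
  define X where "X = (\<lambda>x. (\<Sum>i=1..n. real (kcount h m x i) * (real (kcount h m x i) - 1)
                          / (real m * (real m - 1))) * (1 / P))"
  define Cs where "Cs = (\<lambda>x. \<Sum>b<m. \<Sum>a<b. if h (x a) = h (x b) then 1 else (0::real))"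
  define R where "R = real (card (P2 m))"
  have n25: "real n \<ge> 25" using n_gt by simp
  have a1: "a \<ge> 1" unfolding a_def using n25 delta_pos by (intro ge_one_powr_ge_zero) auto
  have asq: "a^2 = real n powr \<delta>" unfolding a_def power2_eq_square by (simp add: powr_add[symmetric])
  have mval: "real m = real n * a^2 / \<epsilon>^2"
  proof -
    have "\<epsilon> powr (-2) = 1 / \<epsilon>^2" using eps_pos by (simp add: powr_minus powr_numeral divide_inverse)
    moreover have "real n powr (1 + \<delta>) = real n * real n powr \<delta>" using n25 by (simp add: powr_add)
    ultimately show ?thesis using m_def asq by simp
  qed
  have e2: "\<epsilon>^2 < 1/9"
  proof -
    have "\<epsilon>^2 < (1/3)^2" using eps_pos eps_lt by (intro power_strict_mono) auto
    then show ?thesis by (simp add: power2_eq_square)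
  qed
  have m225: "real m \<ge> 225"
  proof -
    have "a^2 \<ge> 1" using a1 by (simp add: one_le_power)
    then have "25 * 1 \<le> real n * a^2" using n25 by (intro mult_mono) auto
    moreover have "\<epsilon>^2 > 0" using eps_pos by simp
    ultimately have "real n * a^2 / \<epsilon>^2 \<ge> 25 / (1/9)" using e2
      by (intro frac_le) auto
    then show ?thesis using mval by simp
  qed
  then have m3: "m \<ge> 3" by simp
  have Pdef: "P = (\<Sum>u\<in>U. \<Sum>v\<in>U. q u * q v * (if h u = h v then 1 else 0))"
    unfolding P_def using slot_facts(1)[OF finU h_range q_sum] .
  have Pge: "P \<ge> 1 / real n"
    unfolding P_def norm_p_sq_def using norm_lower[OF slot_facts(2)[OF finU h_range q_sum]] n_gt by simp
  have "1 / real n > 0" using n_gt by simp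
  then have Ppos: "P > 0" using Pge by linarith
  define \<kappa> where "\<kappa> = (real m - 2) / 2"
  have kpos: "\<kappa> > 0" unfolding \<kappa>_def using m225 by simp
  have kle: "\<forall>d<m. \<kappa> \<le> real (card (Hd m d))"
  proof (intro allI impI)
    fix d assume "d < m"
    then have "m \<le> 2 * card (Hd m d) + 2" using Hd_card[of m d] m3 by simp
    then have "real m \<le> 2 * real (card (Hd m d)) + 2" by linarith
    then show "\<kappa> \<le> real (card (Hd m d))" unfolding \<kappa>_def by simp
  qed
  define K where "K = \<kappa> * P"
  have Kpos: "K > 0" unfolding K_def using kpos Ppos by simp
  have Kge: "K \<ge> (real n * a^2 / \<epsilon>^2 - 2) / (2 * real n)"
  proof -
    have "K \<ge> \<kappa> * (1 / real n)" unfolding K_def using Pge kpos by (intro mult_left_mono) auto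
    then show ?thesis unfolding \<kappa>_def mval[symmetric] by simp
  qed
  have Req: "2 * R = real m * (real m - 1)"
  proof -
    have "real (2 * card (P2 m)) = real (m * (m - 1))" using card_P2[of m] by simp
    then show ?thesis unfolding R_def using m3 by (simp add: of_nat_diff)
  qed
  have Rpos: "R > 0" using Req m225 by (smt (verit) mult_pos_pos)
  have XCs: "X x = Cs x / (R * P)" if "x \<in> S" for x
  proof -
    have "\<forall>j<m. h (x j) \<in> {1..n}" using that h_range unfolding S_def by (auto simp: PiE_iff)
    from collision_identity[of m h x n, OF this]
    have "(\<Sum>i=1..n. real (kcount h m x i) * (real (kcount h m x i) - 1)) = 2 * Cs x"
      unfolding Cs_def by simp
    then have "X x = 2 * Cs x / (real m * (real m - 1)) / P"
      unfolding X_def by (simp add: sum_divide_distrib[symmetric])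
    also have "\<dots> = Cs x / (R * P)" using Req[symmetric] Rpos Ppos by (simp add: field_simps)
    finally show ?thesis .
  qed
  have mgfX: "(\<Sum>x\<in>S. w x * exp (l * X x)) \<le> exp (l + l^2 / K)" if "l \<le> K" for l
  proof -
    have "(\<Sum>x\<in>S. w x * exp (l * X x)) = (\<Sum>x\<in>S. w x * exp (l * (Cs x / (R * P))))"
      using XCs by (intro sum.cong) auto
    also have "\<dots> \<le> exp (l + l^2 / (P * \<kappa>))"
      unfolding S_def w_def Cs_def R_def
      by (rule mgf[OF finU q_nonneg q_sum _ Pdef Ppos kpos kle]) (use m3 that K_def in \<open>auto simp: mult.commute\<close>)
    finally show ?thesis unfolding K_def by (simp add: mult.commute)
  qed
  have wnn: "w x \<ge> 0" if "x \<in> S" for x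
    unfolding w_def using that q_nonneg unfolding S_def by (intro prod_nonneg) auto
  have finS: "finite S" unfolding S_def using finU by (simp add: finite_PiE)
  have mass1: "(\<Sum>x\<in>S. w x) = 1" unfolding S_def w_def using mass[OF _ finU q_sum, of "{..<m}"] by simp
  have Tpos: "T \<ge> 0" unfolding T_def using eps_pos s_pos by (intro mult_nonneg_nonneg add_nonneg_nonneg) auto
  define \<phi> where "\<phi> = (if T \<le> 2 then T^2/4 else T/2)"
  define l1 where "l1 = (if T \<le> 2 then K * T / 2 else K)"
  define l2 where "l2 = - (K * T / 2)"
  have KT0: "K * T \<ge> 0" using Kpos Tpos by simp
  have l1pos: "l1 \<ge> 0" unfolding l1_def using KT0 Kpos by simp
  have l1K: "l1 \<le> K"
  proof (cases "T \<le> 2")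
    case True
    have "K * T \<le> K * 2" using True Kpos by (intro mult_left_mono) auto
    then show ?thesis unfolding l1_def using True by simp
  next
    case False then show ?thesis unfolding l1_def by simp
  qed
  have l2K: "l2 \<le> K" unfolding l2_def using KT0 Kpos by linarith
  have b1: "-l1 * (1 + T) + (l1 + l1^2 / K) \<le> - K * \<phi>"
    by (rule tail_b1[OF Kpos Tpos l1_def \<phi>_def])
  have b2: "-l2 * (1 - T) + (l2 + l2^2 / K) \<le> - K * \<phi>"
    by (rule tail_b2[OF Kpos Tpos l2_def \<phi>_def])
  have pt: "(if \<bar>X x - 1\<bar> \<le> T then 0 else w x) \<le> w x * (exp (-l1 * (1 + T)) * exp (l1 * X x) + exp (-l2 * (1 - T)) * exp (l2 * X x))"
    if "x \<in> S" for x
  proof (cases "\<bar>X x - 1\<bar> \<le> T")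
    case True
    then show ?thesis using wnn[OF that] by simp
  next
    case False
    then have "X x - 1 > T \<or> X x - 1 < - T" by linarith
    then have "1 \<le> exp (-l1 * (1 + T)) * exp (l1 * X x) + exp (-l2 * (1 - T)) * exp (l2 * X x)"
    proof
      assume "X x - 1 > T"
      then have "0 \<le> l1 * (X x - (1 + T))" using l1pos by simp
      then have "1 \<le> exp (-l1 * (1 + T)) * exp (l1 * X x)" by (simp add: exp_add[symmetric] algebra_simps)
      moreover have "0 \<le> exp (-l2 * (1 - T)) * exp (l2 * X x)" by simp
      ultimately show ?thesis by linarith
    next
      assume "X x - 1 < - T"
      then have "0 \<le> (K * T / 2) * ((1 - T) - X x)" using KT0 by (intro mult_nonneg_nonneg) auto
      then have "0 \<le> l2 * (X x - (1 - T))" unfolding l2_def by (simp add: algebra_simps)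
      then have "1 \<le> exp (-l2 * (1 - T)) * exp (l2 * X x)" by (simp add: exp_add[symmetric] algebra_simps)
      moreover have "0 \<le> exp (-l1 * (1 + T)) * exp (l1 * X x)" by simp
      ultimately show ?thesis by linarith
    qed
    then have "w x * 1 \<le> w x * (exp (-l1 * (1 + T)) * exp (l1 * X x) + exp (-l2 * (1 - T)) * exp (l2 * X x))"
      using wnn[OF that] by (intro mult_left_mono) auto
    then show ?thesis using False by simp
  qed
  have bad: "(\<Sum>x\<in>S. if \<bar>X x - 1\<bar> \<le> T then 0 else w x) \<le> 2 * exp (- K * \<phi>)"
  proof -
    have "(\<Sum>x\<in>S. if \<bar>X x - 1\<bar> \<le> T then 0 else w x)
        \<le> (\<Sum>x\<in>S. w x * (exp (-l1 * (1 + T)) * exp (l1 * X x) + exp (-l2 * (1 - T)) * exp (l2 * X x)))"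
      using pt by (intro sum_mono) auto
    also have "\<dots> = exp (-l1 * (1 + T)) * (\<Sum>x\<in>S. w x * exp (l1 * X x)) + exp (-l2 * (1 - T)) * (\<Sum>x\<in>S. w x * exp (l2 * X x))"
      by (simp add: sum.distrib sum_distrib_left algebra_simps)
    also have "\<dots> \<le> exp (-l1 * (1 + T)) * exp (l1 + l1^2 / K) + exp (-l2 * (1 - T)) * exp (l2 + l2^2 / K)"
      using mgfX[OF l1K] mgfX[OF l2K] by (intro add_mono mult_left_mono) auto
    also have "\<dots> = exp (-l1 * (1 + T) + (l1 + l1^2 / K)) + exp (-l2 * (1 - T) + (l2 + l2^2 / K))"
      by (simp only: exp_add)
    also have "\<dots> \<le> exp (- K * \<phi>) + exp (- K * \<phi>)"
      using b1 b2 by (intro add_mono) auto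
    finally show ?thesis by simp
  qed
  have fa: "K * \<phi> \<ge> s^2/4 + 1"
    unfolding \<phi>_def
    by (rule final_arith[OF n25 a1 eps_pos eps_lt s_pos Kge]) (simp add: T_def a_def asq[symmetric])
  have "2 * exp (- K * \<phi>) \<le> 2 * exp (- (s^2/4) - 1)" using fa by simp
  also have "\<dots> = 2 * exp (-1) * exp (- (s^2) / 4)" by (simp add: exp_add[symmetric] exp_diff exp_minus field_simps)
  also have "\<dots> \<le> 10/9 * exp (- (s^2) / 4)"
  proof -
    have "exp (1::real) \<ge> 2" using exp_ge_add_one_self[of "1::real"] by simp
    then have "2 * exp (-1::real) \<le> 10/9" by (simp add: exp_minus field_simps)
    then show ?thesis by (intro mult_right_mono) auto
  qed
  finally have badb: "(\<Sum>x\<in>S. if \<bar>X x - 1\<bar> \<le> T then 0 else w x) \<le> 10/9 * exp (- (s^2) / 4)"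
    using bad by linarith
  have "prob_prod U q m (\<lambda>x. \<bar>X x - 1\<bar> \<le> T) = (\<Sum>x\<in>S. if \<bar>X x - 1\<bar> \<le> T then w x else 0)"
    unfolding prob_prod_def S_def w_def using finU by (simp add: sum.inter_filter finite_PiE)
  also have "\<dots> = (\<Sum>x\<in>S. w x) - (\<Sum>x\<in>S. if \<bar>X x - 1\<bar> \<le> T then 0 else w x)"
    by (simp add: sum_subtractf[symmetric]) (intro sum.cong, auto)
  finally have "prob_prod U q m (\<lambda>x. \<bar>X x - 1\<bar> \<le> T) \<ge> 1 - 10/9 * exp (- (s^2) / 4)"
    using mass1 badb by linarith
  then show ?thesis unfolding X_def T_def P_def .
qed

end
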